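(* Let $K\subset K'$ be compact and connected subgroups of $U(N)$ and let $A\in\mathbb{C}^{N\times N}$. (a) $W_K(C,A)$ is rotationally symmetric for all $C\in\mathbb{C}^{N\times N}$ if and only if the orbit $\mathcal{O}_K(A)$ is weakly rotationally symmetric. (b) If $W_K(C,A)$ is rotationally symmetric for all $C\in\mathbb{C}^{N\times N}$, then $W_{K'}(C,A)$ is rotationally symmetric for all $C\in\mathbb{C}^{N\times N}$.
   Context: For a compact connected subgroup $K\subset U(N)$ and $C,A\in\mathbb{C}^{N\times N}$: $W_K(C,A)=\{\mathrm{tr}(C^\dagger UAU^\dagger)\mid U\in K\}$ and $\mathcal{O}_K(A)=\{UAU^\dagger\mid U\in K\}$. A subset $W\subset\mathbb{C}$ is rotationally symmetric if $e^{i\varphi}W=W$ for all $\varphi\in\mathbb{R}$; the orbit $\mathcal{O}_K(A)$ is weakly rotationally symmetric if $e^{i\varphi}\mathcal{O}_K(A)=\mathcal{O}_K(A)$ for all $\varphi\in\mathbb{R}$. *)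

theory Defs
  imports "HOL-Analysis.Analysis"
begin

definition ctrans :: "complex^'n^'n \<Rightarrow> complex^'n^'n" where
  "ctrans A = (\<chi> i j. cnj (A $ j $ i))"

definition unitary_group :: "(complex^'n^'n) set" where
  "unitary_group = {U. U ** ctrans U = mat 1 \<and> ctrans U ** U = mat 1}"

definition compact_connected_subgroup :: "(complex^'n^'n) set \<Rightarrow> bool" where
  "compact_connected_subgroup K \<longleftrightarrow>
     K \<subseteq> unitary_group \<and> mat 1 \<in> K \<and>
     (\<forall>U\<in>K. \<forall>V\<in>K. U ** V \<in> K) \<and> (\<forall>U\<in>K. ctrans U \<in> K) \<and>
     compact K \<and> connected K"

definition W_K :: "(complex^'n^'n) set \<Rightarrow> complex^'n^'n \<Rightarrow> complex^'n^'n \<Rightarrow> complex set" where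
  "W_K K C A = {trace (ctrans C ** U ** A ** ctrans U) | U. U \<in> K}"

definition orbit_K :: "(complex^'n^'n) set \<Rightarrow> complex^'n^'n \<Rightarrow> (complex^'n^'n) set" where
  "orbit_K K A = {U ** A ** ctrans U | U. U \<in> K}"

definition rot_symmetric :: "complex set \<Rightarrow> bool" where
  "rot_symmetric W \<longleftrightarrow> (\<forall>\<phi>::real. (\<lambda>z. cis \<phi> * z) ` W = W)"

definition weakly_rot_symmetric_orbit :: "(complex^'n^'n) set \<Rightarrow> bool" where
  "weakly_rot_symmetric_orbit Orb \<longleftrightarrow> (\<forall>\<phi>::real. (\<lambda>X. (\<chi> i j. cis \<phi> * X $ i $ j)) ` Orb = Orb)"

end

theory Submission
  imports Defs
begin

definition sc :: "complex \<Rightarrow> complex^'n^'n \<Rightarrow> complex^'n^'n" where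
  "sc c X = (\<chi> i j. c * X $ i $ j)"

lemma ctrans_ctrans[simp]: "ctrans (ctrans X) = X"
  by (simp add: ctrans_def vec_eq_iff)

lemma ctrans_mult: "ctrans (X ** Y) = ctrans Y ** ctrans (X::complex^'n^'n)"
  by (simp add: ctrans_def vec_eq_iff matrix_matrix_mult_def mult.commute)

lemma ctrans_one[simp]: "ctrans (mat 1) = mat 1"
  by (simp add: ctrans_def mat_def vec_eq_iff)

lemma sc1[simp]: "sc 1 X = X"
  by (simp add: sc_def vec_eq_iff)

lemma tr_form: "trace (ctrans C ** X) = (\<Sum>i\<in>UNIV. \<Sum>k\<in>UNIV. cnj (C$k$i) * X$k$i)"
  by (simp add: trace_def ctrans_def matrix_matrix_mult_def)

lemma sc_right: "X ** sc c Y = sc c (X ** Y)"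
  by (simp add: sc_def vec_eq_iff matrix_matrix_mult_def sum_distrib_left mult.left_commute)

lemma sc_left: "sc c X ** Y = sc c (X ** Y)"
  by (simp add: sc_def vec_eq_iff matrix_matrix_mult_def sum_distrib_left mult.assoc)

lemma trace_sc: "trace (ctrans C ** sc c X) = c * trace (ctrans C ** X)"
  by (simp add: tr_form sc_def sum_distrib_left mult.left_commute)

lemma easy:
  assumes cl: "\<forall>U\<in>K. \<forall>V\<in>K. U ** V \<in> K"
    and hyp: "\<forall>\<phi>. \<exists>V\<in>K. sc (cis \<phi>) A = V ** A ** ctrans V"
  shows "rot_symmetric (W_K K C A)" "weakly_rot_symmetric_orbit (orbit_K K A)"
proof -
  have sub: "(\<lambda>z. cis \<phi> * z) ` W_K K C A \<subseteq> W_K K C A" for \<phi>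
  proof
    fix w assume "w \<in> (\<lambda>z. cis \<phi> * z) ` W_K K C A"
    then obtain U where U: "U \<in> K" and w: "w = cis \<phi> * trace (ctrans C ** U ** A ** ctrans U)"
      unfolding W_K_def by auto
    obtain V where V: "V \<in> K" and eq: "sc (cis \<phi>) A = V ** A ** ctrans V" using hyp by blast
    have e1: "U ** sc (cis \<phi>) A ** ctrans U = sc (cis \<phi>) (U ** A ** ctrans U)"
      by (simp add: sc_right sc_left)
    have "w = cis \<phi> * trace (ctrans C ** (U ** A ** ctrans U))"
      by (simp add: w matrix_mul_assoc)
    also have "\<dots> = trace (ctrans C ** (U ** sc (cis \<phi>) A ** ctrans U))"
      by (simp only: e1 trace_sc)
    also have "\<dots> = trace (ctrans C ** (U ** V) ** A ** ctrans (U ** V))"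
      by (simp add: eq ctrans_mult matrix_mul_assoc)
    finally show "w \<in> W_K K C A" unfolding W_K_def using cl U V by blast
  qed
  show "rot_symmetric (W_K K C A)" unfolding rot_symmetric_def
  proof
    fix \<phi> :: real
    have "W_K K C A = (\<lambda>z. cis \<phi> * z) ` ((\<lambda>z. cis (-\<phi>) * z) ` W_K K C A)"
      by (simp add: image_image mult.assoc[symmetric] cis_mult)
    also have "\<dots> \<subseteq> (\<lambda>z. cis \<phi> * z) ` W_K K C A" using sub by blast
    finally show "(\<lambda>z. cis \<phi> * z) ` W_K K C A = W_K K C A" using sub by blast
  qed
  have eqsc: "(\<lambda>X. (\<chi> i j. cis \<phi> * X $ i $ j)) = sc (cis \<phi>)" for \<phi>
    by (simp add: sc_def fun_eq_iff)
  have sub2: "sc (cis \<phi>) ` orbit_K K A \<subseteq> orbit_K K A" for \<phi>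
  proof
    fix w assume "w \<in> sc (cis \<phi>) ` orbit_K K A"
    then obtain U where U: "U \<in> K" and w: "w = sc (cis \<phi>) (U ** A ** ctrans U)"
      unfolding orbit_K_def by auto
    obtain V where V: "V \<in> K" and eq: "sc (cis \<phi>) A = V ** A ** ctrans V" using hyp by blast
    have "w = U ** sc (cis \<phi>) A ** ctrans U"
      by (simp add: w sc_right sc_left)
    also have "\<dots> = (U ** V) ** A ** ctrans (U ** V)"
      by (simp add: eq ctrans_mult matrix_mul_assoc)
    finally show "w \<in> orbit_K K A" unfolding orbit_K_def using cl U V by blast
  qed
  have scsc: "sc a (sc b X) = sc (a * b) X" for a b X
    by (simp add: sc_def vec_eq_iff mult.assoc)
  show "weakly_rot_symmetric_orbit (orbit_K K A)" unfolding weakly_rot_symmetric_orbit_def eqsc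
  proof
    fix \<phi> :: real
    have "orbit_K K A = sc (cis \<phi>) ` (sc (cis (-\<phi>)) ` orbit_K K A)"
      by (simp add: image_image scsc cis_mult sc1)
    also have "\<dots> \<subseteq> sc (cis \<phi>) ` orbit_K K A" using sub2 by blast
    finally show "sc (cis \<phi>) ` orbit_K K A = orbit_K K A" using sub2 by blast
  qed
qed

lemma trace_unitary_conj:
  assumes "U \<in> unitary_group"
  shows "trace (U ** M ** ctrans U) = trace M"
proof -
  have "trace (U ** M ** ctrans U) = trace (ctrans U ** (U ** M))" using trace_mul_sym by blast
  also have "\<dots> = trace M" using assms
    by (simp add: unitary_group_def matrix_mul_assoc)
  finally show ?thesis .
qed

lemma hard:
  assumes I: "mat 1 \<in> K" and KU: "K \<subseteq> unitary_group"
    and rs: "rot_symmetric (W_K K A A)"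
  shows "\<forall>\<phi>. \<exists>V\<in>K. sc (cis \<phi>) A = V ** A ** ctrans V"
proof
  fix \<phi> :: real
  define s where "s = trace (ctrans A ** A)"
  define c where "c = cis \<phi>"
  have "s \<in> W_K K A A" unfolding W_K_def s_def using I
    by (auto intro!: exI[of _ "mat 1"])
  hence "c * s \<in> W_K K A A" using rs unfolding rot_symmetric_def c_def by blast
  then obtain U where U: "U \<in> K" and Us: "c * s = trace (ctrans A ** U ** A ** ctrans U)"
    unfolding W_K_def by auto
  define X where "X = U ** A ** ctrans U"
  have Uu: "U \<in> unitary_group" using U KU by auto
  have xa: "trace (ctrans A ** X) = c * s" using Us by (simp add: X_def matrix_mul_assoc)
  have xx: "trace (ctrans X ** X) = s"
  proof -
    have "ctrans X ** X = U ** (ctrans A ** ((ctrans U ** U) ** A)) ** ctrans U"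
      by (simp add: X_def ctrans_mult matrix_mul_assoc)
    also have "\<dots> = U ** (ctrans A ** A) ** ctrans U" using Uu by (simp add: unitary_group_def)
    finally show ?thesis using trace_unitary_conj[OF Uu] s_def by simp
  qed
  have sreal: "cnj s = s" unfolding s_def tr_form
    by (simp add: mult.commute)
  have cc: "cnj c * c = 1" unfolding c_def
    by (metis cis_cnj cis_mult add.left_inverse cis_zero)
  define D where "D = X - sc c A"
  have "trace (ctrans D ** D) = 
     trace (ctrans X ** X) - c * cnj (trace (ctrans A ** X)) - cnj c * trace (ctrans A ** X)
       + (cnj c * c) * trace (ctrans A ** A)"
  proof -
    have r: "trace (ctrans X ** X) - c * cnj (trace (ctrans A ** X)) - cnj c * trace (ctrans A ** X)
       + (cnj c * c) * trace (ctrans A ** A) = (\<Sum>i\<in>UNIV. \<Sum>k\<in>UNIV. cnj (X$k$i) * X$k$i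
        - c * (A$k$i * cnj (X$k$i)) - cnj c * (cnj (A$k$i) * X$k$i) + cnj c * c * (cnj (A$k$i) * A$k$i))"
      by (simp add: tr_form cnj_sum sum_distrib_left sum_subtractf sum.distrib)
    have l: "trace (ctrans D ** D) = (\<Sum>i\<in>UNIV. \<Sum>k\<in>UNIV. cnj (X$k$i) * X$k$i
        - c * (A$k$i * cnj (X$k$i)) - cnj c * (cnj (A$k$i) * X$k$i) + cnj c * c * (cnj (A$k$i) * A$k$i))"
      unfolding tr_form D_def sc_def
      by (intro sum.cong refl) (simp add: algebra_simps)
    show ?thesis using l r by simp
  qed
  also have "\<dots> = 0" using xa xx sreal cc unfolding s_def
    by (simp add: algebra_simps)
  finally have D0: "trace (ctrans D ** D) = 0" .
  have "D = 0"
  proof -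
    have e: "\<And>z::complex. cnj z * z = complex_of_real ((norm z)^2)"
      by (subst complex_norm_square) (rule mult.commute)
    have "(\<Sum>i\<in>UNIV. \<Sum>k\<in>UNIV. complex_of_real ((norm (D$k$i))^2)) = 0"
      using D0 unfolding tr_form e by (simp only:)
    hence "complex_of_real (\<Sum>i\<in>UNIV. \<Sum>k\<in>UNIV. (norm (D$k$i))^2) = 0"
      by (simp only: of_real_sum)
    hence s0: "(\<Sum>i\<in>UNIV. \<Sum>k\<in>UNIV. (norm (D$k$i))^2) = 0"
      by (simp only: of_real_eq_0_iff)
    have "\<forall>i. (\<Sum>k\<in>UNIV. (norm (D$k$i))^2) = 0"
      using s0 by (subst (asm) sum_nonneg_eq_0_iff) (auto intro: sum_nonneg)
    hence "\<forall>i k. (norm (D$k$i))^2 = 0"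
      by (subst (asm) sum_nonneg_eq_0_iff) auto
    thus ?thesis by (simp add: vec_eq_iff)
  qed
  hence "sc c A = X" unfolding D_def by simp
  thus "\<exists>V\<in>K. sc (cis \<phi>) A = V ** A ** ctrans V" using U unfolding X_def c_def by blast
qed

theorem corollary2p14:
  fixes K K' :: "(complex^'n^'n) set" and A :: "complex^'n^'n"
  assumes "compact_connected_subgroup K"
    and "compact_connected_subgroup K'"
    and "K \<subseteq> K'"
  shows "((\<forall>C. rot_symmetric (W_K K C A)) \<longleftrightarrow> weakly_rot_symmetric_orbit (orbit_K K A))
       \<and> ((\<forall>C. rot_symmetric (W_K K C A)) \<longrightarrow> (\<forall>C. rot_symmetric (W_K K' C A)))"
proof -
  have K: "mat 1 \<in> K" "K \<subseteq> unitary_group" "\<forall>U\<in>K. \<forall>V\<in>K. U ** V \<in> K"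
    using assms(1) unfolding compact_connected_subgroup_def by auto
  have K': "\<forall>U\<in>K'. \<forall>V\<in>K'. U ** V \<in> K'"
    using assms(2) unfolding compact_connected_subgroup_def by auto
  have eqsc: "(\<lambda>X. (\<chi> i j. cis \<phi> * X $ i $ j)) = sc (cis \<phi>)" for \<phi>
    by (simp add: sc_def fun_eq_iff)
  have A1: "A \<in> orbit_K K A" unfolding orbit_K_def using K(1)
    by (auto intro!: exI[of _ "mat 1"])
  have w2h: "\<forall>\<phi>. \<exists>V\<in>K. sc (cis \<phi>) A = V ** A ** ctrans V"
    if "weakly_rot_symmetric_orbit (orbit_K K A)"
  proof
    fix \<phi>
    have "sc (cis \<phi>) A \<in> orbit_K K A" using that A1
      unfolding weakly_rot_symmetric_orbit_def eqsc by blast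
    thus "\<exists>V\<in>K. sc (cis \<phi>) A = V ** A ** ctrans V" unfolding orbit_K_def by blast
  qed
  have 1: "(\<forall>C. rot_symmetric (W_K K C A)) \<longleftrightarrow> weakly_rot_symmetric_orbit (orbit_K K A)"
    using easy[OF K(3)] hard[OF K(1,2)] w2h by blast
  have 2: "\<forall>C. rot_symmetric (W_K K' C A)" if "\<forall>C. rot_symmetric (W_K K C A)"
  proof -
    have "\<forall>\<phi>. \<exists>V\<in>K'. sc (cis \<phi>) A = V ** A ** ctrans V"
      using hard[OF K(1,2)] that assms(3) by blast
    thus ?thesis using easy[OF K'] by blast
  qed
  show ?thesis using 1 2 by blast
qed

end
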